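(* For every $n\ge2$, $|QB(n)|\le\lfloor\log_2 n\rfloor$.
   Context: Bifurcating trees: rooted trees in which every internal node has exactly two children; $\mathcal{T}_n$ is the set of isomorphism classes of bifurcating trees with $n$ leaves. The Colless index is $\mathcal{C}(T)=\sum_{v}|\kappa_T(v_1)-\kappa_T(v_2)|$, summed over internal nodes $v$ with children $v_1,v_2$, where $\kappa_T(w)$ is the number of leaves descending from $w$; $c_n=\min\{\mathcal{C}(T):T\in\mathcal{T}_n\}$. For $n\ge2$, $QB(n)=\{(n_a,n_b)\in\mathbb{N}^2: n_a\ge n_b\ge1,\ n_a+n_b=n,\ c_{n_a}+c_{n_b}+n_a-n_b=c_n\}$. *)

theory Defs
  imports Complex_Main
begin

text \<open>Isomorphism classes are irrelevant for the minimum of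
the Colless index, since the index is invariant under swapping children.\<close>
datatype btree = Leaf | Node btree btree

fun leaves :: "btree \<Rightarrow> nat" where
  "leaves Leaf = 1"
| "leaves (Node l r) = leaves l + leaves r"

fun colless :: "btree \<Rightarrow> int" where
  "colless Leaf = 0"
| "colless (Node l r) = \<bar>int (leaves l) - int (leaves r)\<bar> + colless l + colless r"

definition min_colless :: "nat \<Rightarrow> int" where
  "min_colless n = (LEAST k. k \<ge> 0 \<and> (\<exists>t. leaves t = n \<and> colless t = k))"

definition QB :: "nat \<Rightarrow> (nat \<times> nat) set" where
  "QB n = {(na, nb). na \<ge> nb \<and> nb \<ge> 1 \<and> na + nb = n \<and>
            min_colless na + min_colless nb + int na - int nb = min_colless n}"

end

theory Submission
  imports Defs
begin

fun f :: "nat \<Rightarrow> nat" where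
  "f 0 = 0"
| "f (Suc 0) = 0"
| "f (Suc (Suc k)) = f (k div 2 + 1) + f ((k+1) div 2 + 1) + k mod 2"

lemma f_even: "f (2*x) = 2 * f x"
proof (cases x)
  case 0 then show ?thesis by simp
next
  case (Suc y)
  then have "2*x = Suc (Suc (2*y))" by simp
  then show ?thesis using Suc by simp
qed

lemma f_odd: "x \<ge> 1 \<Longrightarrow> f (2*x+1) = f x + f (x+1) + 1"
proof -
  assume "x \<ge> 1"
  then obtain y where y: "x = Suc y" by (cases x) auto
  have "2*x+1 = Suc (Suc (2*y+1))" using y by simp
  then show ?thesis using y by simp
qed

definition dist' :: "nat \<Rightarrow> nat \<Rightarrow> int" where "dist' a b = \<bar>int a - int b\<bar>"

lemma f_ineq: "int (f (a+b)) \<le> int (f a) + int (f b) + \<bar>int a - int b\<bar>"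
proof (induction "a+b" arbitrary: a b rule: less_induct)
  case less
  show ?case
  proof (cases "a = 0 \<or> b = 0")
    case True then show ?thesis by auto
  next
    case False
    then have a1: "a \<ge> 1" and b1: "b \<ge> 1" by auto
    consider (ee) x y where "a = 2*x" "b = 2*y"
      | (oo) x y where "a = 2*x+1" "b = 2*y+1"
      | (eo) x y where "a = 2*x" "b = 2*y+1"
      | (oe) x y where "a = 2*x+1" "b = 2*y"
      by (metis oddE evenE)
    then show ?thesis
    proof cases
      case ee
      then have x1: "x \<ge> 1" "y \<ge> 1" using a1 b1 by auto
      have "int (f (x+y)) \<le> int (f x) + int (f y) + \<bar>int x - int y\<bar>"
        using less ee x1 by auto
      moreover have "a + b = 2*(x+y)" using ee by simp
      moreover have "f (a+b) = 2 * f (x+y)" using ee f_even[of "x+y"] by (simp add: distrib_left)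
      moreover have "\<bar>int a - int b\<bar> = 2 * \<bar>int x - int y\<bar>" using ee by (simp add: abs_if)
      ultimately show ?thesis using ee f_even[of x] f_even[of y] by simp
    next
      case oo
      show ?thesis
      proof (cases "x = 0 \<or> y = 0")
        case True
        then show ?thesis
        proof
          assume x0: "x = 0"
          have h: "int (f (y+1)) \<le> int (f y) + int (f 1) + \<bar>int y - 1\<bar>"
            using less[of y 1] oo x0 by auto
          have e: "a + b = 2*(y+1)" using oo x0 by simp
          show ?thesis
          proof (cases "y = 0")
            case True then show ?thesis using oo x0 by simp
          next
            case False
            then show ?thesis using h oo x0 e f_even[of "y+1"] f_odd[of y] by auto
          qed
        next
          assume y0: "y = 0"
          have h: "int (f (x+1)) \<le> int (f x) + int (f 1) + \<bar>int x - 1\<bar>"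
            using less[of x 1] oo y0 by auto
          have e: "a + b = 2*(x+1)" using oo y0 by simp
          show ?thesis
          proof (cases "x = 0")
            case True then show ?thesis using oo y0 by simp
          next
            case False
            then show ?thesis using h oo y0 e f_even[of "x+1"] f_odd[of x] by auto
          qed
        qed
      next
        case False
        have h1: "int (f (x+(y+1))) \<le> int (f x) + int (f (y+1)) + \<bar>int x - int (y+1)\<bar>"
          using less[of x "y+1"] oo by auto
        have h2: "int (f ((x+1)+y)) \<le> int (f (x+1)) + int (f y) + \<bar>int (x+1) - int y\<bar>"
          using less[of "x+1" y] oo by auto
        have e: "a + b = 2*(x+y+1)" using oo by simp
        show ?thesis using h1 h2 e oo False f_even[of "x+y+1"] f_odd[of x] f_odd[of y]
          by (auto simp: ac_simps)
      qed
    next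
      case eo
      then have x1: "x \<ge> 1" using a1 by auto
      show ?thesis
      proof (cases "y = 0")
        case True
        have h: "int (f (x+1)) \<le> int (f x) + int (f 1) + \<bar>int x - 1\<bar>"
          using less[of x 1] eo True x1 by auto
        show ?thesis using h eo True x1 f_even[of x] f_odd[of x] by auto
      next
        case False
        have h1: "int (f (x+y)) \<le> int (f x) + int (f y) + \<bar>int x - int y\<bar>"
          using less[of x y] eo by auto
        have h2: "int (f (x+(y+1))) \<le> int (f x) + int (f (y+1)) + \<bar>int x - int (y+1)\<bar>"
          using less[of x "y+1"] eo x1 by auto
        have e: "a + b = 2*(x+y)+1" using eo by simp
        show ?thesis using h1 h2 e eo False x1 f_even[of x] f_odd[of y] f_odd[of "x+y"]
          by (auto simp: ac_simps)
      qed
    next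
      case oe
      then have y1: "y \<ge> 1" using b1 by auto
      show ?thesis
      proof (cases "x = 0")
        case True
        have h: "int (f (y+1)) \<le> int (f y) + int (f 1) + \<bar>int y - 1\<bar>"
          using less[of y 1] oe True y1 by auto
        show ?thesis using h oe True y1 f_even[of y] f_odd[of y] by auto
      next
        case False
        have h1: "int (f (y+x)) \<le> int (f y) + int (f x) + \<bar>int y - int x\<bar>"
          using less[of y x] oe by auto
        have h2: "int (f (y+(x+1))) \<le> int (f y) + int (f (x+1)) + \<bar>int y - int (x+1)\<bar>"
          using less[of y "x+1"] oe y1 by auto
        have e: "a + b = 2*(x+y)+1" using oe by simp
        show ?thesis using h1 h2 e oe False y1 f_even[of y] f_odd[of x] f_odd[of "x+y"]
          by (auto simp: ac_simps)
      qed
    qed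
  qed
qed

lemma leaves_pos: "leaves t \<ge> 1"
  by (induction t) auto

lemma colless_ge: "int (f (leaves t)) \<le> colless t"
proof (induction t)
  case Leaf then show ?case by simp
next
  case (Node l r)
  have "int (f (leaves l + leaves r)) \<le> int (f (leaves l)) + int (f (leaves r)) + \<bar>int (leaves l) - int (leaves r)\<bar>"
    by (rule f_ineq)
  then show ?case using Node by simp
qed

lemma exists_tree: "n \<ge> 1 \<Longrightarrow> \<exists>t. leaves t = n \<and> colless t = int (f n)"
proof (induction n rule: less_induct)
  case (less n)
  show ?case
  proof (cases "n = 1")
    case True
    then show ?thesis by (intro exI[of _ Leaf]) simp
  next
    case False
    then obtain k where k: "n = Suc (Suc k)" using less.prems by (cases n; cases "n - 1") auto
    let ?a = "(k+1) div 2 + 1" and ?b = "k div 2 + 1"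
    obtain ta where ta: "leaves ta = ?a" "colless ta = int (f ?a)" using less.IH[of ?a] k by auto
    have bl: "?b < n" using k by (simp add: le_imp_less_Suc)
    obtain tb where tb: "leaves tb = ?b" "colless tb = int (f ?b)" using less.IH[of ?b] bl by auto
    have "?a + ?b = n" using k by simp
    moreover have "\<bar>int ?a - int ?b\<bar> = int (k mod 2)" by (auto simp: abs_if; presburger)
    ultimately show ?thesis using ta tb k
      by (intro exI[of _ "Node ta tb"]) simp
  qed
qed

lemma min_colless_f: "n \<ge> 1 \<Longrightarrow> min_colless n = int (f n)"
proof -
  assume n: "n \<ge> 1"
  obtain t where t: "leaves t = n" "colless t = int (f n)" using exists_tree[OF n] by blast
  show ?thesis unfolding min_colless_def
  proof (rule Least_equality)
    show "int (f n) \<ge> 0 \<and> (\<exists>t. leaves t = n \<and> colless t = int (f n))" using t by auto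
  next
    fix y assume "y \<ge> 0 \<and> (\<exists>t. leaves t = n \<and> colless t = y)"
    then show "int (f n) \<le> y" using colless_ge by auto
  qed
qed

definition E :: "nat \<Rightarrow> nat \<Rightarrow> bool" where
  "E a b \<longleftrightarrow> int (f (a+b)) = int (f a) + int (f b) + \<bar>int a - int b\<bar>"

lemma E_sym: "E a b = E b a"
  unfolding E_def by (auto simp: ac_simps abs_minus_commute)

lemma E_ee: "E (2*x) (2*y) \<Longrightarrow> E x y"
proof -
  assume h: "E (2*x) (2*y)"
  have "f (2*x+2*y) = 2 * f (x+y)" using f_even[of "x+y"] by (simp add: distrib_left)
  moreover have "\<bar>int (2*x) - int (2*y)\<bar> = 2 * \<bar>int x - int y\<bar>" by (simp add: abs_if)
  ultimately show ?thesis using h f_even[of x] f_even[of y] unfolding E_def by simp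
qed

lemma E_oo: "E (2*x+1) (2*y+1) \<Longrightarrow> x = y"
proof (rule ccontr)
  assume h: "E (2*x+1) (2*y+1)" and ne: "x \<noteq> y"
  show False
  proof (cases "x = 0 \<or> y = 0")
    case True
    then show False
    proof
      assume x0: "x = 0"
      then have y1: "y \<ge> 1" using ne by auto
      have i: "int (f (y+1)) \<le> int (f y) + int (f 1) + \<bar>int y - 1\<bar>" using f_ineq[of y 1] by simp
      have "2*x+1 + (2*y+1) = 2*(y+1)" using x0 by simp
      then show False using h i x0 y1 f_even[of "y+1"] f_odd[of y] unfolding E_def by auto
    next
      assume y0: "y = 0"
      then have x1: "x \<ge> 1" using ne by auto
      have i: "int (f (x+1)) \<le> int (f x) + int (f 1) + \<bar>int x - 1\<bar>" using f_ineq[of x 1] by simp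
      have "2*x+1 + (2*y+1) = 2*(x+1)" using y0 by simp
      then show False using h i y0 x1 f_even[of "x+1"] f_odd[of x] unfolding E_def by auto
    qed
  next
    case False
    have h1: "int (f (x+(y+1))) \<le> int (f x) + int (f (y+1)) + \<bar>int x - int (y+1)\<bar>"
      by (rule f_ineq)
    have h2: "int (f ((x+1)+y)) \<le> int (f (x+1)) + int (f y) + \<bar>int (x+1) - int y\<bar>"
      by (rule f_ineq)
    have e: "2*x+1 + (2*y+1) = 2*(x+y+1)" by simp
    show False using h h1 h2 e ne False f_even[of "x+y+1"] f_odd[of x] f_odd[of y]
      unfolding E_def by (auto simp: ac_simps)
  qed
qed

lemma E_eo1: "E (2*x) 1 \<Longrightarrow> x \<ge> 1 \<Longrightarrow> x = 1"
proof -
  assume h: "E (2*x) 1" and x1: "x \<ge> 1"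
  have i: "int (f (x+1)) \<le> int (f x) + int (f 1) + \<bar>int x - 1\<bar>" using f_ineq[of x 1] by simp
  show "x = 1" using h i x1 f_even[of x] f_odd[of x] unfolding E_def by auto
qed

lemma E_eo: "E (2*x) (2*y+1) \<Longrightarrow> x \<ge> 1 \<Longrightarrow> y \<ge> 1 \<Longrightarrow> E x y \<and> E x (y+1)"
proof -
  assume h: "E (2*x) (2*y+1)" and x1: "x \<ge> 1" and y1: "y \<ge> 1"
  have h1: "int (f (x+y)) \<le> int (f x) + int (f y) + \<bar>int x - int y\<bar>" by (rule f_ineq)
  have h2: "int (f (x+(y+1))) \<le> int (f x) + int (f (y+1)) + \<bar>int x - int (y+1)\<bar>" by (rule f_ineq)
  have e: "2*x + (2*y+1) = 2*(x+y)+1" by simp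
  have fo: "f (2*(x+y)+1) = f (x+y) + f (x+y+1) + 1" using f_odd[of "x+y"] x1 by simp
  show ?thesis using h h1 h2 e fo f_even[of x] f_odd[of y] y1
    unfolding E_def by (auto simp: ac_simps)
qed

definition QBf :: "nat \<Rightarrow> (nat \<times> nat) set" where
  "QBf n = {(a,b). b \<le> a \<and> 1 \<le> b \<and> a + b = n \<and> E a b}"

definition D :: "nat \<Rightarrow> nat set" where
  "D n = (\<lambda>(a,b). a - b) ` QBf n"

lemma QB_eq: "QB n = QBf n"
proof -
  have "min_colless na + min_colless nb + int na - int nb = min_colless (na+nb) \<longleftrightarrow> E na nb"
    if "nb \<le> na" "1 \<le> nb" for na nb
    using that min_colless_f[of na] min_colless_f[of nb] min_colless_f[of "na+nb"]
    unfolding E_def by auto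
  then show ?thesis unfolding QB_def QBf_def by auto
qed

lemma D_iff: "d \<in> D n \<longleftrightarrow> (\<exists>a b. b \<le> a \<and> 1 \<le> b \<and> a + b = n \<and> E a b \<and> d = a - b)"
  unfolding D_def QBf_def by force

lemma D_par: "d \<in> D n \<Longrightarrow> \<exists>b. b \<ge> 1 \<and> n = d + 2*b"
  unfolding D_iff by auto

lemma D_small: "n \<le> 3 \<Longrightarrow> d \<in> D n \<Longrightarrow> d = n - 2 \<and> n \<ge> 2"
  unfolding D_iff by (auto; presburger)

lemma D_even: "d \<in> D (2*m) \<Longrightarrow> d = 0 \<or> (\<exists>e. d = 2*e \<and> e \<in> D m)"
proof -
  assume "d \<in> D (2*m)"
  then obtain a b where ab: "b \<le> a" "1 \<le> b" "a + b = 2*m" "E a b" "d = a - b"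
    unfolding D_iff by blast
  consider (ee) x y where "a = 2*x" "b = 2*y"
      | (oo) x y where "a = 2*x+1" "b = 2*y+1"
      | (eo) x y where "a = 2*x" "b = 2*y+1"
      | (oe) x y where "a = 2*x+1" "b = 2*y"
      by (metis oddE evenE)
  then show ?thesis
  proof cases
    case ee
    then have "E x y" using ab E_ee by simp
    then have "x - y \<in> D m" unfolding D_iff using ab ee by (intro exI[of _ x] exI[of _ y]) auto
    then show ?thesis using ab ee by auto
  next
    case oo
    then have "x = y" using ab E_oo by simp
    then show ?thesis using ab oo by simp
  next
    case eo then show ?thesis using ab by presburger
  next
    case oe then show ?thesis using ab by presburger
  qed
qed

lemma D_odd: "d \<in> D (2*m+1) \<Longrightarrow> m \<ge> 2 \<Longrightarrow>
  \<exists>k. k \<ge> 1 \<and> d = 2*k - 1 \<and> ((k \<in> D m \<and> k - 1 \<in> D (m+1)) \<or> (k - 1 \<in> D m \<and> k \<in> D (m+1)))"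
proof -
  assume dm: "d \<in> D (2*m+1)" and m2: "m \<ge> 2"
  then obtain a b where ab: "b \<le> a" "1 \<le> b" "a + b = 2*m+1" "E a b" "d = a - b"
    unfolding D_iff by blast
  consider (ee) x y where "a = 2*x" "b = 2*y"
      | (oo) x y where "a = 2*x+1" "b = 2*y+1"
      | (eo) x y where "a = 2*x" "b = 2*y+1"
      | (oe) x y where "a = 2*x+1" "b = 2*y"
      by (metis oddE evenE)
  then show ?thesis
  proof cases
    case ee then show ?thesis using ab by presburger
  next
    case oo then show ?thesis using ab by presburger
  next
    case eo
    have x1: "x \<ge> 1" using ab eo by auto
    show ?thesis
    proof (cases "y = 0")
      case True
      then have "x = 1" using E_eo1[of x] ab eo x1 by simp
      then show ?thesis using True eo ab m2 by simp
    next
      case False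
      then have y1: "y \<ge> 1" by simp
      have E2: "E x y" "E x (y+1)" using E_eo[of x y] ab eo x1 y1 by auto
      have xy: "x \<ge> y + 1" using ab eo by simp
      have "x - y \<in> D m" unfolding D_iff using E2 xy y1 ab eo by (intro exI[of _ x] exI[of _ y]) auto
      moreover have "x - y - 1 \<in> D (m+1)" unfolding D_iff using E2 xy y1 ab eo
        by (intro exI[of _ x] exI[of _ "y+1"]) auto
      ultimately show ?thesis using ab eo xy by (intro exI[of _ "x - y"]) auto
    qed
  next
    case oe
    have x1: "y \<ge> 1" using ab oe by auto
    have y1: "x \<ge> 1" using ab oe by auto
    have "E (2*y) (2*x+1)" using ab oe E_sym by simp
    then have E2: "E y x" "E y (x+1)" using E_eo[of y x] x1 y1 by auto
    have xy: "x \<ge> y" using ab oe by simp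
    have "x - y \<in> D m" unfolding D_iff using E2 xy y1 x1 ab oe E_sym
      by (intro exI[of _ x] exI[of _ y]) auto
    moreover have "x + 1 - y \<in> D (m+1)" unfolding D_iff using E2 xy y1 x1 ab oe E_sym
      by (intro exI[of _ "x+1"] exI[of _ y]) auto
    ultimately show ?thesis using ab oe xy by (intro exI[of _ "x + 1 - y"]) auto
  qed
qed

definition P1 :: "nat \<Rightarrow> bool" where
  "P1 n \<longleftrightarrow> (\<forall>d d' j. d \<in> D n \<longrightarrow> d' \<in> D n \<longrightarrow> 2^j \<le> d \<longrightarrow> d < 2^(j+1) \<longrightarrow> 2^j \<le> d' \<longrightarrow> d' < 2^(j+1) \<longrightarrow> d = d')"

definition P2 :: "nat \<Rightarrow> bool" where
  "P2 n \<longleftrightarrow> (\<forall>d \<in> D n. 2*d \<le> n)"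

definition P3 :: "nat \<Rightarrow> bool" where
  "P3 n \<longleftrightarrow> (\<forall>j d. 1 \<le> j \<longrightarrow> 2^j \<in> D n \<longrightarrow> d \<in> D n \<longrightarrow> 2^(j-1) \<le> d \<longrightarrow> d < 2^j \<longrightarrow> False)"

lemma base_step: "n \<le> 3 \<Longrightarrow> P1 n \<and> P2 n \<and> P3 n"
proof -
  assume n: "n \<le> 3"
  have s: "\<And>d. d \<in> D n \<Longrightarrow> d = n - 2 \<and> n \<ge> 2" using D_small[OF n] by blast
  have "P1 n" unfolding P1_def
  proof (intro allI impI)
    fix d d' :: nat and j :: nat assume "d \<in> D n" "d' \<in> D n"
    then show "d = d'" using s[of d] s[of d'] by simp
  qed
  moreover have "P2 n" unfolding P2_def using s n by fastforce
  moreover have "P3 n" unfolding P3_def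
  proof (intro allI impI)
    fix j d assume j: "1 \<le> j" and "2^j \<in> D n"
    then have "(2::nat)^j = n - 2" using s by blast
    moreover have "(2::nat)^1 \<le> 2^j" using j by (rule power_increasing) simp
    ultimately show False using n by simp
  qed
  ultimately show ?thesis by blast
qed

lemma even_step: "P1 m \<Longrightarrow> P2 m \<Longrightarrow> P3 m \<Longrightarrow> P1 (2*m) \<and> P2 (2*m) \<and> P3 (2*m)"
proof -
  assume h1: "P1 m" and h2: "P2 m" and h3: "P3 m"
  have "P2 (2*m)" unfolding P2_def
  proof
    fix d assume "d \<in> D (2*m)"
    then consider "d = 0" | e where "d = 2*e" "e \<in> D m" using D_even by blast
    then show "2*d \<le> 2*m" proof cases
      case 1 then show ?thesis by simp
    next
      case 2 then show ?thesis using h2 unfolding P2_def by auto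
    qed
  qed
  moreover have "P1 (2*m)" unfolding P1_def
  proof (intro allI impI)
    fix d d' j assume d: "d \<in> D (2*m)" and d': "d' \<in> D (2*m)" and b: "2^j \<le> d" "d < 2^(j+1)" "2^j \<le> d'" "d' < 2^(j+1)"
    have pj: "(2::nat)^j > 0" by simp
    have "d \<noteq> 0" "d' \<noteq> 0" using b pj by linarith+
    then obtain e e' where e: "d = 2*e" "e \<in> D m" "d' = 2*e'" "e' \<in> D m" using D_even d d' by blast
    show "d = d'"
    proof (cases j)
      case 0 then show ?thesis using b e by simp
    next
      case (Suc i)
      then have "2^i \<le> e" "e < 2^(i+1)" "2^i \<le> e'" "e' < 2^(i+1)" using b e by auto
      then show ?thesis using h1 e unfolding P1_def by blast
    qed
  qed
  moreover have "P3 (2*m)" unfolding P3_def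
  proof (intro allI impI)
    fix j d assume j: "1 \<le> j" and p: "2^j \<in> D (2*m)" and d: "d \<in> D (2*m)" and b: "2^(j-1) \<le> d" "d < 2^j"
    obtain i where i: "j = Suc i" using j by (cases j) auto
    have "(2::nat)^j \<noteq> 0" by simp
    have "(2::nat)^j = 0 \<or> (\<exists>e. (2::nat)^j = 2*e \<and> e \<in> D m)" by (rule D_even[OF p])
    then have "\<exists>e. (2::nat)^j = 2*e \<and> e \<in> D m" by simp
    then obtain e' where e': "(2::nat)^j = 2*e'" "e' \<in> D m" by blast
    then have e'2: "e' = 2^i" using i by simp
    have pj: "(2::nat)^(j-1) > 0" by simp
    have "d \<noteq> 0" using b pj by linarith
    then obtain e where e: "d = 2*e" "e \<in> D m" using D_even d by blast
    show False
    proof (cases i)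
      case 0 then show ?thesis using b e i by simp
    next
      case (Suc l)
      then have "2^(Suc l - 1) \<le> e" "e < 2^(Suc l)" using b e i by auto
      moreover have "2^(Suc l) \<in> D m" using e' e'2 Suc by simp
      moreover have "1 \<le> Suc l" by simp
      ultimately show ?thesis using h3 e unfolding P3_def by blast
    qed
  qed
  ultimately show ?thesis by blast
qed

lemma D_even_iff: "d \<in> D n \<Longrightarrow> even n = even d"
  using D_par[of d n] by auto

lemma P1D: "P1 n \<Longrightarrow> a \<in> D n \<Longrightarrow> b \<in> D n \<Longrightarrow> 2^i \<le> a \<Longrightarrow> a < 2^(i+1) \<Longrightarrow> 2^i \<le> b \<Longrightarrow> b < 2^(i+1) \<Longrightarrow> a = b"
  unfolding P1_def by blast

lemma three:
  assumes h1: "P1 m" and h2: "P1 (m+1)" and xy: "x < y" and yz: "y < z"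
    and ux: "x \<in> D m \<or> x \<in> D (m+1)" and uy: "y \<in> D m \<or> y \<in> D (m+1)"
    and uz: "z \<in> D m \<or> z \<in> D (m+1)"
    and lo: "2^i \<le> x" and hi: "z < 2^(i+1)"
  shows False
proof -
  have bx: "2^i \<le> x" "x < 2^(i+1)" using lo xy yz hi by auto
  have by': "2^i \<le> y" "y < 2^(i+1)" using lo xy yz hi by auto
  have bz: "2^i \<le> z" "z < 2^(i+1)" using lo xy yz hi by auto
  show False using ux uy uz
  proof (elim disjE)
    assume "x \<in> D m" "y \<in> D m" then show False using P1D[OF h1 _ _ bx by'] xy by auto
  next
    assume "x \<in> D m" "y \<in> D m" then show False using P1D[OF h1 _ _ bx by'] xy by auto
  next
    assume "x \<in> D m" "y \<in> D (m+1)" "z \<in> D m" then show False using P1D[OF h1 _ _ bx bz] xy yz by auto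
  next
    assume "x \<in> D m" "y \<in> D (m+1)" "z \<in> D (m+1)" then show False using P1D[OF h2 _ _ by' bz] yz by auto
  next
    assume "x \<in> D (m+1)" "y \<in> D m" "z \<in> D m" then show False using P1D[OF h1 _ _ by' bz] yz by auto
  next
    assume "x \<in> D (m+1)" "y \<in> D m" "z \<in> D (m+1)" then show False using P1D[OF h2 _ _ bx bz] xy yz by auto
  next
    assume "x \<in> D (m+1)" "y \<in> D (m+1)" then show False using P1D[OF h2 _ _ bx by'] xy by auto
  next
    assume "x \<in> D (m+1)" "y \<in> D (m+1)" then show False using P1D[OF h2 _ _ bx by'] xy by auto
  qed
qed

lemma same_set:
  assumes "a \<in> D m \<or> a \<in> D (m+1)" "b \<in> D m \<or> b \<in> D (m+1)" "even a = even b"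
  shows "(a \<in> D m \<and> b \<in> D m) \<or> (a \<in> D (m+1) \<and> b \<in> D (m+1))"
  using assms D_even_iff[of a m] D_even_iff[of b m] D_even_iff[of a "m+1"] D_even_iff[of b "m+1"]
  by auto

lemma odd_pair:
  assumes h1: "P1 m" and h2: "P1 (m+1)" and h3: "P3 m" and h4: "P3 (m+1)"
    and k1: "k \<ge> 1" and kk: "k < k'"
    and u1: "k - 1 \<in> D m \<or> k - 1 \<in> D (m+1)" and u2: "k \<in> D m \<or> k \<in> D (m+1)"
    and u3: "k' - 1 \<in> D m \<or> k' - 1 \<in> D (m+1)" and u4: "k' \<in> D m \<or> k' \<in> D (m+1)"
    and lo: "2^j \<le> 2*k - 1" and hi: "2*k' - 1 < 2^(j+1)"
  shows False
proof (cases j)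
  case 0 then show ?thesis using lo hi kk k1 by simp
next
  case (Suc j1)
  show ?thesis
  proof (cases j1)
    case 0 then show ?thesis using Suc lo hi kk k1 by simp
  next
    case (Suc i)
    define p :: nat where "p = 2^(Suc i)"
    have p2: "p \<ge> 2" unfolding p_def
      using power_increasing[of 1 "Suc i" "2::nat"] by simp
    have pj: "2^j = 2*p" "2^(j+1) = 4*p" using Suc \<open>j = Suc j1\<close> unfolding p_def by simp_all
    have kp: "k \<ge> p + 1" "k' \<le> 2*p" using lo hi pj by linarith+
    have band: "2^(Suc i) = p" "2^(Suc i + 1) = 2*p" unfolding p_def by simp_all
    consider (a) "k' < 2*p" | (b) "k' = 2*p" "k' - 1 > k" | (c) "k' = 2*p" "k = 2*p - 1"
      using kp kk by linarith
    then show ?thesis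
    proof cases
      case a
      show ?thesis
        by (rule three[OF h1 h2 _ _ u1 u2 u4, of "Suc i"]) (use a kp kk k1 band in auto)
    next
      case b
      show ?thesis
        by (rule three[OF h1 h2 _ _ u1 u2 u3, of "Suc i"]) (use b kp kk k1 band in auto)
    next
      case c
      have ev: "even (k - 1) = even k'" using c p2 by auto
      have km: "k - 1 = 2*p - 2" using c by simp
      have lo': "2^(j-1) \<le> k - 1" "k - 1 < 2^j" using pj km p2 Suc \<open>j = Suc j1\<close> band by auto
      have j1: "1 \<le> j" using \<open>j = Suc j1\<close> by simp
      have kj: "k' = 2^j" using c pj by simp
      from same_set[OF u1 u4 ev] show ?thesis
      proof
        assume "k - 1 \<in> D m \<and> k' \<in> D m"
        then show False using h3 j1 kj lo' unfolding P3_def by blast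
      next
        assume "k - 1 \<in> D (m+1) \<and> k' \<in> D (m+1)"
        then show False using h4 j1 kj lo' unfolding P3_def by blast
      qed
    qed
  qed
qed

lemma odd_step:
  assumes m2: "m \<ge> 2" and h1: "P1 m" and h2: "P1 (m+1)" and h3: "P3 m" and h4: "P3 (m+1)"
    and g1: "P2 m" and g2: "P2 (m+1)"
  shows "P1 (2*m+1) \<and> P2 (2*m+1) \<and> P3 (2*m+1)"
proof -
  have "P2 (2*m+1)" unfolding P2_def
  proof
    fix d assume "d \<in> D (2*m+1)"
    then obtain k where k: "k \<ge> 1" "d = 2*k - 1" "(k \<in> D m \<and> k - 1 \<in> D (m+1)) \<or> (k - 1 \<in> D m \<and> k \<in> D (m+1))"
      using D_odd m2 by blast
    from k(3) show "2*d \<le> 2*m+1"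
    proof
      assume "k \<in> D m \<and> k - 1 \<in> D (m+1)"
      then have "2*k \<le> m" using g1 unfolding P2_def by blast
      then show ?thesis using k by linarith
    next
      assume "k - 1 \<in> D m \<and> k \<in> D (m+1)"
      then have "2*k \<le> m+1" using g2 unfolding P2_def by blast
      then show ?thesis using k by linarith
    qed
  qed
  moreover have "P3 (2*m+1)" unfolding P3_def
  proof (intro allI impI)
    fix j d :: nat assume j: "1 \<le> j" and p: "2^j \<in> D (2*m+1)"
    have "even (2*m+1) = even ((2::nat)^j)" using D_even_iff[OF p] .
    then show False using j by simp
  qed
  moreover have "P1 (2*m+1)" unfolding P1_def
  proof (intro allI impI)
    fix d d' j assume d: "d \<in> D (2*m+1)" and d': "d' \<in> D (2*m+1)" and b: "2^j \<le> d" "d < 2^(j+1)" "2^j \<le> d'" "d' < 2^(j+1)"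
    obtain k where k: "k \<ge> 1" "d = 2*k - 1" "(k \<in> D m \<and> k - 1 \<in> D (m+1)) \<or> (k - 1 \<in> D m \<and> k \<in> D (m+1))"
      using D_odd[OF d m2] by blast
    obtain k' where k': "k' \<ge> 1" "d' = 2*k' - 1" "(k' \<in> D m \<and> k' - 1 \<in> D (m+1)) \<or> (k' - 1 \<in> D m \<and> k' \<in> D (m+1))"
      using D_odd[OF d' m2] by blast
    have u: "k - 1 \<in> D m \<or> k - 1 \<in> D (m+1)" "k \<in> D m \<or> k \<in> D (m+1)"
      "k' - 1 \<in> D m \<or> k' - 1 \<in> D (m+1)" "k' \<in> D m \<or> k' \<in> D (m+1)" using k k' by blast+
    show "d = d'"
    proof (rule linorder_cases[of k k'])
      assume "k < k'"
      then have False using odd_pair[OF h1 h2 h3 h4 k(1) _ u(1) u(2) u(3) u(4), of j] b k k' by auto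
      then show ?thesis ..
    next
      assume "k = k'" then show ?thesis using k k' by simp
    next
      assume "k' < k"
      then have False using odd_pair[OF h1 h2 h3 h4 k'(1) _ u(3) u(4) u(1) u(2), of j] b k k' by auto
      then show ?thesis ..
    qed
  qed
  ultimately show ?thesis by blast
qed

lemma invariants: "P1 n \<and> P2 n \<and> P3 n"
proof (induction n rule: less_induct)
  case (less n)
  show ?case
  proof (cases "n \<le> 3")
    case True then show ?thesis by (rule base_step)
  next
    case False
    obtain m where m: "n = 2*m \<or> n = 2*m+1" by (metis oddE evenE)
    then have m2: "m \<ge> 2" using False by auto
    from m show ?thesis
    proof
      assume n: "n = 2*m"
      have "P1 m \<and> P2 m \<and> P3 m" using less.IH[of m] n m2 by auto
      then show ?thesis using even_step n by blast
    next
      assume n: "n = 2*m+1"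
      have "P1 m \<and> P2 m \<and> P3 m" using less.IH[of m] n m2 by auto
      moreover have "P1 (m+1) \<and> P2 (m+1) \<and> P3 (m+1)" using less.IH[of "m+1"] n m2 by auto
      ultimately show ?thesis using odd_step[OF m2] n by blast
    qed
  qed
qed

lemma card_QB: "card (QB n) = card (D n)"
proof -
  have "inj_on (\<lambda>(a,b). a - b) (QBf n)"
    by (rule inj_onI) (auto simp: QBf_def)
  then show ?thesis unfolding QB_eq D_def by (simp add: card_image)
qed

lemma card_D_le:
  assumes "n \<ge> 2" "2^L \<le> n" "n < 2^(L+1)"
  shows "card (D n) \<le> L"
proof -
  have inv: "P1 n" "P2 n" using invariants by blast+
  define g where "g d = (if d = 0 then 0 else (SOME j. 2^j \<le> d \<and> d < 2^(j+1)))" for d :: nat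
  have gp: "2^(g d) \<le> d \<and> d < 2^(g d + 1)" if "d \<ge> 1" for d
  proof -
    have "\<exists>j. 2^j \<le> d \<and> d < 2^(j+1)" using ex_power_ivl1[of 2 d] that by simp
    then have "2^(SOME j. 2^j \<le> d \<and> d < 2^(j+1)) \<le> d \<and> d < 2^((SOME j. 2^j \<le> d \<and> d < 2^(j+1)) + 1)"
      by (rule someI_ex)
    then show ?thesis using that unfolding g_def by simp
  qed
  have L1: "L \<ge> 1"
  proof (rule ccontr)
    assume "\<not> L \<ge> 1" then have "L = 0" by simp
    then show False using assms by simp
  qed
  have inj: "inj_on g (D n)"
  proof (rule inj_onI)
    fix d d' assume d: "d \<in> D n" and d': "d' \<in> D n" and e: "g d = g d'"
    show "d = d'"
    proof (cases "d = 0 \<or> d' = 0")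
      case False
      then have "2^(g d) \<le> d \<and> d < 2^(g d + 1)" "2^(g d) \<le> d' \<and> d' < 2^(g d + 1)"
        using gp[of d] gp[of d'] e by auto
      then show ?thesis using P1D[OF inv(1) d d'] by blast
    next
      case True
      show ?thesis
      proof (rule ccontr)
        assume ne: "d \<noteq> d'"
        have "(d = 0 \<and> d' = 1) \<or> (d' = 0 \<and> d = 1)"
        proof (cases "d = 0")
          case True
          then have "d' \<ge> 1" using ne by simp
          then have "2^(g d') \<le> d' \<and> d' < 2^(g d' + 1)" by (rule gp)
          moreover have "g d' = 0" using e True unfolding g_def by simp
          ultimately show ?thesis using True by simp
        next
          case False
          then have "d' = 0" using \<open>d = 0 \<or> d' = 0\<close> by simp
          then have "d \<ge> 1" using ne by simp
          then have "2^(g d) \<le> d \<and> d < 2^(g d + 1)" by (rule gp)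
          moreover have "g d = 0" using e \<open>d' = 0\<close> unfolding g_def by simp
          ultimately show ?thesis using \<open>d' = 0\<close> by simp
        qed
        then show False using D_even_iff[OF d] D_even_iff[OF d'] by auto
      qed
    qed
  qed
  have sub: "g ` D n \<subseteq> {..<L}"
  proof
    fix x assume "x \<in> g ` D n"
    then obtain d where d: "d \<in> D n" "x = g d" by blast
    show "x \<in> {..<L}"
    proof (cases "d = 0")
      case True then show ?thesis using d L1 unfolding g_def by simp
    next
      case False
      then have "2^(g d) \<le> d" using gp[of d] by simp
      moreover have "2*d \<le> n" using inv(2) d unfolding P2_def by blast
      moreover have "(2::nat)^(L+1) = 2 * 2^L" by simp
      ultimately have "(2::nat)^(g d) < 2^L" using assms by linarith
      then show ?thesis using d by simp
    qed
  qed
  have "card (D n) \<le> card {..<L}"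
    by (rule card_inj_on_le[OF inj sub]) simp
  then show ?thesis by simp
qed

theorem corollary6:
  fixes n :: nat
  assumes "n \<ge> 2"
  shows "int (card (QB n)) \<le> \<lfloor>log 2 (real n)\<rfloor>"
proof -
  obtain L where L: "2^L \<le> n" "n < 2^(L+1)" using ex_power_ivl1[of 2 n] assms by auto
  have "\<lfloor>log 2 (real n)\<rfloor> = int L"
    using floor_log_nat_eq_if[of 2 L n] L by simp
  then show ?thesis using card_D_le[OF assms L] card_QB by simp
qed

end
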